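(* Assume $p,q>0$ $\mu$-a.e. and $\rho^{\mathrm w}_\alpha(p,q)\in(0,\infty)$ for all $\alpha\in[0,1]$. Then, as $n\to\infty$, \[ L_n^*=\exp\{-nD_C^{\mathrm w}(\mathbb P,\mathbb Q)+o(n)\},\qquad\text{i.e.}\qquad \lim_{n\to\infty}-\frac1n\ln L_n^*=D_C^{\mathrm w}(\mathbb P,\mathbb Q). \]
   Context: Let $\mathcal X$ be a Polish space with its Borel $\sigma$-algebra, $\mu$ a $\sigma$-finite reference measure, and $\mathbb P,\mathbb Q$ probability measures on $\mathcal X$ with densities $p,q$ w.r.t. $\mu$. Let $\varphi:\mathcal X\to[0,\infty)$ be a measurable weight, extended to samples by $\varphi(x_1^n)=\prod_{i=1}^n\varphi(x_i)$, and $p(x_1^n)=\prod_i p(x_i)$, $q(x_1^n)=\prod_i q(x_i)$. Weighted affinity: $\rho^{\mathrm w}_\alpha(p,q)=\int_{\mathcal X}\varphi(x)p(x)^\alpha q(x)^{1-\alpha}\,\mathrm d\mu(x)$ for $\alpha\in[0,1]$; weighted Bhattacharyya distance $D^{\mathrm w}_{B,\alpha}(p,q)=-\ln\rho^{\mathrm w}_\alpha(p,q)$; weighted Chernoff information $D_C^{\mathrm w}(\mathbb P,\mathbb Q)=\max_{\alpha\in[0,1]}D^{\mathrm w}_{B,\alpha}(p,q)$. With $\mathcal D$ the class of measurable randomised rules $D:\mathcal X^n\to[0,1]$ (probability of deciding for $H_1:X_1^n\sim\mathbb Q^{\otimes n}$ versus $H_0:X_1^n\sim\mathbb P^{\otimes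 n}$), define $\alpha_\varphi(D)=\int\varphi(x_1^n)D(x_1^n)p(x_1^n)\,\mathrm d\mu^{\otimes n}$, $\beta_\varphi(D)=\int\varphi(x_1^n)(1-D(x_1^n))q(x_1^n)\,\mathrm d\mu^{\otimes n}$, and $L_n^*=\inf_{D\in\mathcal D}[\alpha_\varphi(D)+\beta_\varphi(D)]$. *)

theory Defs
  imports "HOL-Analysis.Analysis"
begin

definition rho_w :: "'a measure \<Rightarrow> ('a \<Rightarrow> real) \<Rightarrow> ('a \<Rightarrow> real) \<Rightarrow> ('a \<Rightarrow> real) \<Rightarrow> real \<Rightarrow> ennreal" where
  "rho_w M \<phi> p q a = (\<integral>\<^sup>+ x. ennreal (\<phi> x * p x powr a * q x powr (1 - a)) \<partial>M)"

definition bhatt_w :: "'a measure \<Rightarrow> ('a \<Rightarrow> real) \<Rightarrow> ('a \<Rightarrow> real) \<Rightarrow> ('a \<Rightarrow> real) \<Rightarrow> real \<Rightarrow> real" where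
  "bhatt_w M \<phi> p q a = - ln (enn2real (rho_w M \<phi> p q a))"

definition chernoff_w :: "'a measure \<Rightarrow> ('a \<Rightarrow> real) \<Rightarrow> ('a \<Rightarrow> real) \<Rightarrow> ('a \<Rightarrow> real) \<Rightarrow> real" where
  "chernoff_w M \<phi> p q = (SUP a\<in>{0..1}. bhatt_w M \<phi> p q a)"

text \<open>Product of a function over an n-sample x_1^n (samples are functions on {..<n}).\<close>
definition prod_sample :: "('a \<Rightarrow> real) \<Rightarrow> nat \<Rightarrow> (nat \<Rightarrow> 'a) \<Rightarrow> real" where
  "prod_sample f n xs = (\<Prod>i<n. f (xs i))"

definition rules :: "'a measure \<Rightarrow> nat \<Rightarrow> ((nat \<Rightarrow> 'a) \<Rightarrow> real) set" where
  "rules M n = {D. D \<in> borel_measurable (PiM {..<n} (\<lambda>_. M)) \<and>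
                   (\<forall>x\<in>space (PiM {..<n} (\<lambda>_. M)). 0 \<le> D x \<and> D x \<le> 1)}"

definition alpha_w :: "'a measure \<Rightarrow> ('a \<Rightarrow> real) \<Rightarrow> ('a \<Rightarrow> real) \<Rightarrow> nat \<Rightarrow> ((nat \<Rightarrow> 'a) \<Rightarrow> real) \<Rightarrow> ennreal" where
  "alpha_w M \<phi> p n D = (\<integral>\<^sup>+ x. ennreal (prod_sample \<phi> n x * D x * prod_sample p n x) \<partial>(PiM {..<n} (\<lambda>_. M)))"

definition beta_w :: "'a measure \<Rightarrow> ('a \<Rightarrow> real) \<Rightarrow> ('a \<Rightarrow> real) \<Rightarrow> nat \<Rightarrow> ((nat \<Rightarrow> 'a) \<Rightarrow> real) \<Rightarrow> ennreal" where
  "beta_w M \<phi> q n D = (\<integral>\<^sup>+ x. ennreal (prod_sample \<phi> n x * (1 - D x) * prod_sample q n x) \<partial>(PiM {..<n} (\<lambda>_. M)))"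

definition L_star :: "'a measure \<Rightarrow> ('a \<Rightarrow> real) \<Rightarrow> ('a \<Rightarrow> real) \<Rightarrow> ('a \<Rightarrow> real) \<Rightarrow> nat \<Rightarrow> ennreal" where
  "L_star M \<phi> p q n = (INF D\<in>rules M n. alpha_w M \<phi> p n D + beta_w M \<phi> q n D)"

end

theory Submission
  imports Defs
begin


lemma cosh_bound:
  fixes y :: real assumes "\<bar>y\<bar> \<le> 1"
  shows "exp y + exp (- y) \<le> 2 + 2 * y\<^sup>2"
proof -
  have key: "exp z + exp (-z) \<le> 2 + 2 * z\<^sup>2" if "0 \<le> z" "z \<le> 1" for z :: real
  proof -
    have e1: "exp z \<le> 1 + z + z\<^sup>2" using exp_bound[OF that] .
    have "1 + z \<le> exp z" by simp
    have "exp (-z) * (1 + z) \<le> 1"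
    proof -
      have "exp (-z) * (1 + z) \<le> exp (-z) * exp z"
        by (intro mult_left_mono) auto
      also have "exp (-z) * exp z = 1" by (simp add: mult_exp_exp)
      finally show ?thesis .
    qed
    moreover have "(1 - z + z\<^sup>2) * (1 + z) = 1 + z^3"
      by (simp add: algebra_simps power2_eq_square power3_eq_cube)
    moreover have "0 \<le> z^3" using that by simp
    ultimately have "exp (-z) * (1+z) \<le> (1 - z + z\<^sup>2) * (1 + z)" by linarith
    hence "exp (-z) \<le> 1 - z + z\<^sup>2" using that
      by (simp add: mult_le_cancel_right_pos)
    thus ?thesis using e1 by simp
  qed
  show ?thesis
  proof (cases "0 \<le> y")
    case True thus ?thesis using key assms by auto
  next
    case False thus ?thesis using key[of "-y"] assms by auto
  qed
qed


lemma prod_int: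
  fixes g :: "'a \<Rightarrow> ennreal"
  assumes sf: "sigma_finite_measure M" and g: "g \<in> borel_measurable M"
  shows "(\<integral>\<^sup>+x. (\<Prod>i<n. g (x i)) \<partial>PiM {..<n} (\<lambda>_. M)) = (\<integral>\<^sup>+x. g x \<partial>M) ^ n"
proof -
  interpret product_sigma_finite "\<lambda>_. M"
    using sf by (simp add: product_sigma_finite_def)
  have "(\<integral>\<^sup>+x. (\<Prod>i<n. g (x i)) \<partial>PiM {..<n} (\<lambda>_. M)) = (\<Prod>i<n. (\<integral>\<^sup>+x. g x \<partial>M))"
    by (rule product_nn_integral_prod) (auto simp: g)
  thus ?thesis by simp
qed

lemma prod_int_real:
  fixes g :: "'a \<Rightarrow> real"
  assumes sf: "sigma_finite_measure M" and g: "g \<in> borel_measurable M" and nn: "\<And>x. 0 \<le> g x"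
  shows "(\<integral>\<^sup>+x. ennreal (\<Prod>i<n. g (x i)) \<partial>PiM {..<n} (\<lambda>_. M)) = (\<integral>\<^sup>+x. ennreal (g x) \<partial>M) ^ n"
proof -
  have "(\<integral>\<^sup>+x. ennreal (\<Prod>i<n. g (x i)) \<partial>PiM {..<n} (\<lambda>_. M)) = (\<integral>\<^sup>+x. (\<Prod>i<n. ennreal (g (x i))) \<partial>PiM {..<n} (\<lambda>_. M))"
    by (intro nn_integral_cong) (simp add: prod_ennreal nn)
  also have "\<dots> = (\<integral>\<^sup>+x. ennreal (g x) \<partial>M) ^ n"
    by (rule prod_int[OF sf]) (use g in measurable)
  finally show ?thesis .
qed

lemma meas_prod_sample[measurable]:
  assumes [measurable]: "g \<in> borel_measurable M"
  shows "prod_sample g n \<in> borel_measurable (PiM {..<n} (\<lambda>_. M))"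
  unfolding prod_sample_def by measurable

lemma min_le_powr:
  fixes a b x :: real assumes "0 \<le> a" "0 \<le> b" "0 \<le> x" "x \<le> 1"
  shows "min a b \<le> a powr x * b powr (1 - x)"
proof (cases "a = 0 \<or> b = 0")
  case True thus ?thesis using assms by auto
next
  case False
  define m where "m = min a b"
  have m: "0 < m" "m \<le> a" "m \<le> b" using False assms by (auto simp: m_def)
  have "m = m powr x * m powr (1 - x)" using m by (simp add: powr_add[symmetric])
  also have "\<dots> \<le> a powr x * b powr (1 - x)"
    using m assms by (intro mult_mono powr_mono2) auto
  finally show ?thesis by (simp add: m_def)
qed

lemma powr_le_sum:
  fixes a b x :: real assumes "0 \<le> a" "0 \<le> b" "0 \<le> x" "x \<le> 1"
  shows "a powr x * b powr (1 - x) \<le> a + b"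
proof (cases "a = 0 \<and> b = 0")
  case True thus ?thesis by auto
next
  case False
  define m where "m = max a b"
  have m: "0 < m" "a \<le> m" "b \<le> m" using False assms by (auto simp: m_def)
  have "a powr x * b powr (1 - x) \<le> m powr x * m powr (1 - x)"
    using m assms by (intro mult_mono powr_mono2) auto
  also have "\<dots> = m" using m by (simp add: powr_add[symmetric])
  also have "\<dots> \<le> a + b" using assms by (simp add: m_def)
  finally show ?thesis .
qed

lemma L_star_eq:
  fixes M :: "'a measure" and p q \<phi> :: "'a \<Rightarrow> real"
  assumes [measurable]: "p \<in> borel_measurable M" "q \<in> borel_measurable M" "\<phi> \<in> borel_measurable M"
    and nn: "\<And>x. 0 \<le> p x" "\<And>x. 0 \<le> q x" "\<And>x. 0 \<le> \<phi> x"
  shows "L_star M \<phi> p q n = (\<integral>\<^sup>+x. ennreal (prod_sample \<phi> n x * min (prod_sample p n x) (prod_sample q n x)) \<partial>PiM {..<n} (\<lambda>_. M))"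
    (is "_ = ?L")
proof -
  have pn: "0 \<le> prod_sample p n x" "0 \<le> prod_sample q n x" "0 \<le> prod_sample \<phi> n x" for x
    unfolding prod_sample_def using nn by (auto intro: prod_nonneg)
  have sum_eq: "alpha_w M \<phi> p n D + beta_w M \<phi> q n D =
      (\<integral>\<^sup>+x. ennreal (prod_sample \<phi> n x * D x * prod_sample p n x + prod_sample \<phi> n x * (1 - D x) * prod_sample q n x) \<partial>PiM {..<n} (\<lambda>_. M))"
    if D: "D \<in> rules M n" for D
  proof -
    have [measurable]: "D \<in> borel_measurable (PiM {..<n} (\<lambda>_. M))" using D by (simp add: rules_def)
    have D01: "x \<in> space (PiM {..<n} (\<lambda>_. M)) \<Longrightarrow> 0 \<le> D x \<and> D x \<le> 1" for x
      using D by (simp add: rules_def)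
    have "alpha_w M \<phi> p n D + beta_w M \<phi> q n D =
      (\<integral>\<^sup>+x. ennreal (prod_sample \<phi> n x * D x * prod_sample p n x) + ennreal (prod_sample \<phi> n x * (1 - D x) * prod_sample q n x) \<partial>PiM {..<n} (\<lambda>_. M))"
      unfolding alpha_w_def beta_w_def by (rule nn_integral_add[symmetric]) auto
    also have "\<dots> = (\<integral>\<^sup>+x. ennreal (prod_sample \<phi> n x * D x * prod_sample p n x + prod_sample \<phi> n x * (1 - D x) * prod_sample q n x) \<partial>PiM {..<n} (\<lambda>_. M))"
      by (intro nn_integral_cong ennreal_plus[symmetric]) (use D01 pn in auto)
    finally show ?thesis .
  qed
  have lower: "?L \<le> alpha_w M \<phi> p n D + beta_w M \<phi> q n D" if D: "D \<in> rules M n" for D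
  proof -
    have D01: "x \<in> space (PiM {..<n} (\<lambda>_. M)) \<Longrightarrow> 0 \<le> D x \<and> D x \<le> 1" for x
      using D by (simp add: rules_def)
    have minl: "min a b \<le> d * a + (1 - d) * b" if "0 \<le> d" "d \<le> 1" for a b d :: real
    proof -
      have "d * min a b \<le> d * a" "(1 - d) * min a b \<le> (1 - d) * b"
        using that by (auto intro: mult_left_mono)
      thus ?thesis by (simp add: algebra_simps)
    qed
    have "?L \<le> (\<integral>\<^sup>+x. ennreal (prod_sample \<phi> n x * D x * prod_sample p n x + prod_sample \<phi> n x * (1 - D x) * prod_sample q n x) \<partial>PiM {..<n} (\<lambda>_. M))"
    proof (intro nn_integral_mono ennreal_leI)
      fix x assume x: "x \<in> space (PiM {..<n} (\<lambda>_. M))"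
      have "prod_sample \<phi> n x * min (prod_sample p n x) (prod_sample q n x) \<le>
          prod_sample \<phi> n x * (D x * prod_sample p n x + (1 - D x) * prod_sample q n x)"
        using minl D01[OF x] pn by (intro mult_left_mono) auto
      thus "prod_sample \<phi> n x * min (prod_sample p n x) (prod_sample q n x) \<le>
          prod_sample \<phi> n x * D x * prod_sample p n x + prod_sample \<phi> n x * (1 - D x) * prod_sample q n x"
        by (simp add: algebra_simps)
    qed
    thus ?thesis using sum_eq[OF D] by simp
  qed
  define D0 where "D0 = (\<lambda>x. if prod_sample p n x \<le> prod_sample q n x then 1 else (0::real))"
  have D0: "D0 \<in> rules M n" unfolding rules_def D0_def by auto
  have eqD0: "alpha_w M \<phi> p n D0 + beta_w M \<phi> q n D0 = ?L"
    unfolding sum_eq[OF D0] by (intro nn_integral_cong) (auto simp: D0_def min_def)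
  have "L_star M \<phi> p q n \<le> alpha_w M \<phi> p n D0 + beta_w M \<phi> q n D0"
    unfolding L_star_def using D0 by (rule INF_lower)
  hence "L_star M \<phi> p q n \<le> ?L" by (simp only: eqD0)
  moreover have "?L \<le> L_star M \<phi> p q n" unfolding L_star_def by (rule INF_greatest) (rule lower)
  ultimately show ?thesis by simp
qed



lemma scal:
  fixes a t c y :: real
  assumes a: "0 \<le> a" "a \<le> 1" and t: "0 < t" and c: "0 \<le> c"
  shows "exp (a * y) \<le> exp c * min (exp y) 1 + exp (a * y) * ((if 0<a then exp (t*(y-c)) else 0) + (if a<1 then exp (-t*(y+c)) else 0))"
proof -
  define Ap where "Ap = (if 0<a then exp (t*(y-c)) else 0)"
  define Am where "Am = (if a<1 then exp (-t*(y+c)) else 0)"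
  have Ap0: "0 \<le> Ap" and Am0: "0 \<le> Am" by (auto simp: Ap_def Am_def)
  have e0: "0 \<le> exp c * min (exp y) 1" by simp
  have "exp (a * y) \<le> exp c * min (exp y) 1 + exp (a * y) * (Ap + Am)"
  proof (cases "-c \<le> (1-a) * y \<and> a * y \<le> c")
    case True
    have "exp (a * y) \<le> exp c * exp y" using True by (simp add: mult_exp_exp algebra_simps)
    moreover have "exp (a * y) \<le> exp c * 1" using True by simp
    ultimately have "exp (a * y) \<le> exp c * min (exp y) 1" by (simp add: min_def)
    moreover have "0 \<le> exp (a * y) * (Ap + Am)" using Ap0 Am0 by simp
    ultimately show ?thesis by linarith
  next
    case False
    hence "a * y > c \<or> (1-a) * y < -c" by linarith
    hence "1 \<le> Ap + Am"
    proof
      assume h: "a * y > c"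
      have "0 < a" using h c a by (cases "a = 0") auto
      have "0 < y"
      proof (rule ccontr)
        assume "\<not> 0 < y" hence "a * y \<le> 0" using a by (simp add: mult_nonneg_nonpos)
        thus False using h c by linarith
      qed
      have "a * y \<le> 1 * y" using a \<open>0<y\<close> by (intro mult_right_mono) auto
      hence "0 \<le> t*(y-c)" using h t by simp
      hence "1 \<le> Ap" using \<open>0<a\<close> by (simp add: Ap_def)
      thus ?thesis using Am0 by linarith
    next
      assume h: "(1-a) * y < -c"
      have "a < 1" using h c a by (cases "a = 1") auto
      have "y < 0"
      proof (rule ccontr)
        assume "\<not> y < 0" hence "0 \<le> (1-a) * y" using a by simp
        thus False using h c by linarith
      qed
      have "(1-a) * y \<ge> 1 * y" using a \<open>y<0\<close> by (intro mult_right_mono_neg) auto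
      hence "0 \<le> -t*(y+c)" using h t by (simp add: mult_nonneg_nonpos)
      hence "1 \<le> Am" using \<open>a<1\<close> by (simp add: Am_def)
      thus ?thesis using Ap0 by linarith
    qed
    hence "exp (a * y) * 1 \<le> exp (a * y) * (Ap + Am)" by (intro mult_left_mono) auto
    thus ?thesis using e0 by linarith
  qed
  thus ?thesis by (simp add: Ap_def Am_def)
qed



lemma core:
  fixes M :: "'a measure" and ph p q :: "'a \<Rightarrow> real" and K :: real
  assumes sf: "sigma_finite_measure M"
    and [measurable]: "ph \<in> borel_measurable M" "p \<in> borel_measurable M" "q \<in> borel_measurable M"
    and nn: "\<And>x. 0 \<le> ph x" "\<And>x. 0 \<le> p x" "\<And>x. 0 \<le> q x"
    and hB: "\<And>x. ph x \<noteq> 0 \<Longrightarrow> 0 < p x \<and> 0 < q x \<and> \<bar>ln (p x) - ln (q x)\<bar> \<le> K"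
    and K: "0 < K"
    and fin: "(\<integral>\<^sup>+x. ennreal (ph x * q x) \<partial>M) < \<infinity>"
  shows "\<exists>a\<in>{0..1}. \<forall>\<epsilon>>0. eventually (\<lambda>n. ennreal (exp (- real n * \<epsilon>) / 2) *
      (\<integral>\<^sup>+x. ennreal (ph x * q x * exp (a * (ln (p x) - ln (q x)))) \<partial>M) ^ n
      \<le> (\<integral>\<^sup>+x. ennreal (prod_sample ph n x * min (prod_sample p n x) (prod_sample q n x)) \<partial>PiM {..<n} (\<lambda>_. M))) sequentially"
proof -
  define f where "f x = ln (p x) - ln (q x)" for x
  have [measurable]: "f \<in> borel_measurable M" unfolding f_def by measurable
  define g where "g a x = ph x * q x * exp (a * f x)" for a x
  have g_nn: "0 \<le> g a x" for a x unfolding g_def using nn by auto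
  have g_meas[measurable]: "g a \<in> borel_measurable M" for a unfolding g_def by measurable
  define I where "I a = (\<integral>\<^sup>+x. ennreal (g a x) \<partial>M)" for a
  define R where "R a = enn2real (I a)" for a
  have fK: "ph x \<noteq> 0 \<Longrightarrow> \<bar>f x\<bar> \<le> K" for x using hB by (simp add: f_def)
  have gbound: "g b x \<le> exp (\<bar>b-a\<bar>*K) * g a x" for a b x
  proof (cases "ph x = 0")
    case True thus ?thesis by (simp add: g_def)
  next
    case False
    have "(b-a) * f x \<le> \<bar>b-a\<bar> * \<bar>f x\<bar>" by (metis abs_ge_self abs_mult)
    also have "\<dots> \<le> \<bar>b-a\<bar> * K" using fK[OF False] by (intro mult_left_mono) auto
    finally have "exp ((b-a) * f x) \<le> exp (\<bar>b-a\<bar> * K)" by simp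
    hence "ph x * q x * exp ((b-a) * f x) * exp (a * f x) \<le> ph x * q x * exp (\<bar>b-a\<bar> * K) * exp (a * f x)"
      using nn by (intro mult_right_mono mult_left_mono) auto
    moreover have "exp (b * f x) = exp ((b-a) * f x) * exp (a * f x)"
      by (simp add: mult_exp_exp algebra_simps)
    ultimately show ?thesis by (simp add: g_def algebra_simps)
  qed
  have Ibound: "I b \<le> ennreal (exp (\<bar>b-a\<bar>*K)) * I a" for a b
  proof -
    have "I b \<le> (\<integral>\<^sup>+x. ennreal (exp (\<bar>b-a\<bar>*K)) * ennreal (g a x) \<partial>M)"
      unfolding I_def using gbound g_nn
      by (intro nn_integral_mono) (simp add: ennreal_mult[symmetric])
    also have "\<dots> = ennreal (exp (\<bar>b-a\<bar>*K)) * I a"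
      unfolding I_def by (rule nn_integral_cmult) simp
    finally show ?thesis .
  qed
  have I0: "I 0 < \<infinity>" using fin by (simp add: I_def g_def)
  have Ifin: "I a < \<infinity>" for a
  proof -
    have "ennreal (exp (\<bar>a-0\<bar>*K)) * I 0 < \<infinity>" using I0 by (simp add: ennreal_mult_less_top)
    thus ?thesis using Ibound[of a 0] by (meson order.strict_trans1)
  qed
  have IR: "I a = ennreal (R a)" for a using Ifin[of a] by (simp add: R_def)
  have R0: "0 \<le> R a" for a by (simp add: R_def)
  have Rbound: "R b \<le> exp (\<bar>b-a\<bar>*K) * R a" for a b
  proof -
    have "ennreal (R b) \<le> ennreal (exp (\<bar>b-a\<bar>*K) * R a)"
      using Ibound[of b a] R0 by (simp add: IR ennreal_mult)
    thus ?thesis using R0 by simp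
  qed
  have em: "exp (-z) * exp z = 1" for z :: real by (simp add: mult_exp_exp)
  have cont: "continuous_on {0..1} R"
  proof (intro continuous_at_imp_continuous_on ballI)
    fix a :: real
    show "isCont R a" unfolding isCont_def
    proof (rule tendsto_sandwich[of "\<lambda>b. exp (- \<bar>b-a\<bar>*K) * R a" _ _ "\<lambda>b. exp (\<bar>b-a\<bar>*K) * R a"])
      show "eventually (\<lambda>b. exp (- \<bar>b-a\<bar>*K) * R a \<le> R b) (at a)"
      proof (intro always_eventually allI)
        fix b
        have "exp (- \<bar>b-a\<bar>*K) * R a \<le> exp (- \<bar>b-a\<bar>*K) * (exp (\<bar>a-b\<bar>*K) * R b)"
          using Rbound[of a b] by (intro mult_left_mono) auto
        also have "\<dots> = R b" using em[of "\<bar>a-b\<bar>*K"] by (simp add: abs_minus_commute mult.assoc[symmetric])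
        finally show "exp (- \<bar>b-a\<bar>*K) * R a \<le> R b" .
      qed
      show "eventually (\<lambda>b. R b \<le> exp (\<bar>b-a\<bar>*K) * R a) (at a)"
        using Rbound by (intro always_eventually allI) auto
      have "((\<lambda>b. exp (- \<bar>b-a\<bar>*K) * R a) \<longlongrightarrow> exp (- \<bar>a-a\<bar>*K) * R a) (at a)"
        by (intro tendsto_intros)
      thus "((\<lambda>b. exp (- \<bar>b-a\<bar>*K) * R a) \<longlongrightarrow> R a) (at a)" by simp
      have "((\<lambda>b. exp (\<bar>b-a\<bar>*K) * R a) \<longlongrightarrow> exp (\<bar>a-a\<bar>*K) * R a) (at a)"
        by (intro tendsto_intros)
      thus "((\<lambda>b. exp (\<bar>b-a\<bar>*K) * R a) \<longlongrightarrow> R a) (at a)" by simp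
    qed
  qed
  obtain a0 where a0: "a0 \<in> {0..1}" "\<And>b. b \<in> {0..1} \<Longrightarrow> R a0 \<le> R b"
    using continuous_attains_inf[OF compact_Icc _ cont] by auto
  show ?thesis
  proof (intro bexI[OF _ a0(1)] allI impI)
    fix \<epsilon> :: real assume eps: "\<epsilon> > 0"
    define t where "t = min (min (1/K) (\<epsilon>/(4*K^2))) (min (if 0<a0 then a0 else 1) (if a0<1 then 1-a0 else 1))"
    have t0: "0 < t" using K eps a0 by (auto simp: t_def)
    have tK: "t*K \<le> 1"
    proof -
      have "t*K \<le> (1/K)*K" using K t0 by (intro mult_right_mono) (auto simp: t_def)
      thus ?thesis using K by simp
    qed
    define c where "c = 2*t^2*K^2"
    have c0: "0 \<le> c" by (simp add: c_def)
    have ct: "c \<le> t*\<epsilon>/2"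
    proof -
      have "t \<le> \<epsilon>/(4*K^2)" by (simp add: t_def)
      hence "t*(4*K^2) \<le> \<epsilon>" using K by (simp add: field_simps)
      hence "t * (t*(4*K^2)) \<le> t * \<epsilon>" using t0 by (intro mult_left_mono) auto
      thus ?thesis by (simp add: c_def power2_eq_square algebra_simps)
    qed
    have tlo: "t \<le> a0" if "0 < a0" using that by (simp add: t_def)
    have thi: "t \<le> 1 - a0" if "a0 < 1" using that by (simp add: t_def)
    have pm: "I (a+t) + I (a-t) \<le> ennreal (2 + c) * I a" for a
    proof -
      have pw: "g (a+t) x + g (a-t) x \<le> (2 + c) * g a x" for x
      proof (cases "ph x = 0")
        case True thus ?thesis by (simp add: g_def)
      next
        case False
        have "\<bar>t * f x\<bar> \<le> t * K" using fK[OF False] t0 by (simp add: abs_mult)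
        hence tf1: "\<bar>t * f x\<bar> \<le> 1" using tK by linarith
        have "(t * f x)^2 \<le> (t*K)^2"
          using \<open>\<bar>t * f x\<bar> \<le> t * K\<close> by (metis abs_le_square_iff abs_of_nonneg t0 K less_imp_le mult_nonneg_nonneg abs_ge_zero order_trans)
        hence "exp (t * f x) + exp (- (t * f x)) \<le> 2 + c"
          using cosh_bound[OF tf1] by (simp add: c_def power_mult_distrib)
        hence "ph x * q x * exp (a * f x) * (exp (t * f x) + exp (- (t * f x))) \<le> ph x * q x * exp (a * f x) * (2 + c)"
          using nn by (intro mult_left_mono) auto
        moreover have "exp ((a+t) * f x) = exp (a * f x) * exp (t * f x)" "exp ((a-t) * f x) = exp (a * f x) * exp (- (t * f x))"
          by (simp_all add: mult_exp_exp algebra_simps)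
        ultimately show ?thesis by (simp add: g_def algebra_simps)
      qed
      have "I (a+t) + I (a-t) = (\<integral>\<^sup>+x. ennreal (g (a+t) x) + ennreal (g (a-t) x) \<partial>M)"
        unfolding I_def by (rule nn_integral_add[symmetric]) auto
      also have "\<dots> \<le> (\<integral>\<^sup>+x. ennreal (2 + c) * ennreal (g a x) \<partial>M)"
        using pw g_nn c0 by (intro nn_integral_mono) (simp add: ennreal_mult[symmetric] ennreal_plus[symmetric] del: ennreal_plus)
      also have "\<dots> = ennreal (2 + c) * I a" unfolding I_def by (rule nn_integral_cmult) simp
      finally show ?thesis .
    qed
    have Rpm: "R (a+t) + R (a-t) \<le> (2 + c) * R a" for a
    proof -
      have "ennreal (R (a+t) + R (a-t)) = I (a+t) + I (a-t)" by (simp add: IR R0)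
      also have "\<dots> \<le> ennreal (2+c) * I a" by (rule pm)
      also have "\<dots> = ennreal ((2+c) * R a)" by (simp add: IR ennreal_mult R0 c0)
      finally have "ennreal (R (a+t) + R (a-t)) \<le> ennreal ((2 + c) * R a)" .
      moreover have "0 \<le> (2 + c) * R a" using R0 c0 by simp
      ultimately show ?thesis by simp
    qed
    have Rp: "R (a0+t) \<le> (1+c) * R a0" if "0 < a0"
    proof -
      have "R a0 \<le> R (a0 - t)" using a0 tlo[OF that] t0 by (intro a0(2)) auto
      thus ?thesis using Rpm[of a0] by (simp add: algebra_simps)
    qed
    have Rm: "R (a0-t) \<le> (1+c) * R a0" if "a0 < 1"
    proof -
      have "R a0 \<le> R (a0 + t)" using a0 thi[OF that] t0 by (intro a0(2)) auto
      thus ?thesis using Rpm[of a0] by (simp add: algebra_simps)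
    qed
    have c1: "1 + c \<le> exp c" by simp
    define P where "P n = PiM {..<n} (\<lambda>_. M)" for n :: nat
    define S where "S n x = (\<Sum>i<n. f (x i))" for n :: nat and x :: "nat \<Rightarrow> 'a"
    define W where "W n x = (\<Prod>i<n. g a0 (x i))" for n :: nat and x :: "nat \<Rightarrow> 'a"
    define Phi where "Phi n x = prod_sample ph n x * min (prod_sample p n x) (prod_sample q n x)" for n :: nat and x :: "nat \<Rightarrow> 'a"
    define Ap where "Ap n x = (if 0<a0 then exp (t*(S n x - real n*\<epsilon>)) else 0)" for n :: nat and x :: "nat \<Rightarrow> 'a"
    define Am where "Am n x = (if a0<1 then exp (-t*(S n x + real n*\<epsilon>)) else 0)" for n :: nat and x :: "nat \<Rightarrow> 'a"
    have [measurable]: "S n \<in> borel_measurable (P n)" "W n \<in> borel_measurable (P n)"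
      "Phi n \<in> borel_measurable (P n)" "Ap n \<in> borel_measurable (P n)" "Am n \<in> borel_measurable (P n)" for n
      unfolding S_def W_def Phi_def Ap_def Am_def P_def by measurable
    have W0: "0 \<le> W n x" for n x unfolding W_def using g_nn by (auto intro: prod_nonneg)
    have Phi0: "0 \<le> Phi n x" for n x unfolding Phi_def prod_sample_def using nn by (auto intro!: prod_nonneg mult_nonneg_nonneg)
    have Ap0: "0 \<le> Ap n x" and Am0: "0 \<le> Am n x" for n x by (auto simp: Ap_def Am_def)
    have pw: "W n x \<le> exp (real n*\<epsilon>) * Phi n x + W n x * (Ap n x + Am n x)" for n :: nat and x :: "nat \<Rightarrow> 'a"
    proof (cases "\<exists>i<n. ph (x i) = 0")
      case True
      hence "W n x = 0" unfolding W_def by (auto simp: g_def)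
      thus ?thesis using Phi0[of n x] by simp
    next
      case False
      hence pos: "0 < p (x i)" "0 < q (x i)" if "i < n" for i using hB that by auto
      have "prod_sample p n x = (\<Prod>i<n. q (x i) * exp (f (x i)))"
        unfolding prod_sample_def f_def
      proof (intro prod.cong refl)
        fix i assume "i \<in> {..<n}"
        hence "0 < p (x i)" "0 < q (x i)" using pos by auto
        thus "p (x i) = q (x i) * exp (ln (p (x i)) - ln (q (x i)))" by (simp add: exp_diff)
      qed
      also have "\<dots> = prod_sample q n x * exp (S n x)"
        by (simp add: prod.distrib prod_sample_def S_def exp_sum)
      finally have Pe: "prod_sample p n x = prod_sample q n x * exp (S n x)" .
      have We: "W n x = prod_sample ph n x * prod_sample q n x * exp (a0 * S n x)"
        by (simp add: W_def g_def prod.distrib prod_sample_def S_def exp_sum sum_distrib_left)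
      have Qpos: "0 < prod_sample q n x" unfolding prod_sample_def using pos by (auto intro: prod_pos)
      have G0: "0 \<le> prod_sample ph n x * prod_sample q n x"
        unfolding prod_sample_def using nn by (auto intro!: prod_nonneg mult_nonneg_nonneg)
      have mn: "min (prod_sample q n x * exp (S n x)) (prod_sample q n x) = prod_sample q n x * min (exp (S n x)) 1"
        using Qpos by (simp add: min_mult_distrib_left)
      have "exp (a0 * S n x) \<le> exp (real n*\<epsilon>) * min (exp (S n x)) 1 + exp (a0 * S n x) * (Ap n x + Am n x)"
        unfolding Ap_def Am_def using scal[of a0 t "real n*\<epsilon>" "S n x"] a0 t0 eps by auto
      hence "prod_sample ph n x * prod_sample q n x * exp (a0 * S n x) \<le>
          prod_sample ph n x * prod_sample q n x * (exp (real n*\<epsilon>) * min (exp (S n x)) 1 + exp (a0 * S n x) * (Ap n x + Am n x))"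
        using G0 by (intro mult_left_mono) auto
      thus ?thesis unfolding We Phi_def Pe mn by (simp add: algebra_simps)
    qed
    show "eventually (\<lambda>n. ennreal (exp (- real n * \<epsilon>) / 2) *
      (\<integral>\<^sup>+x. ennreal (ph x * q x * exp (a0 * (ln (p x) - ln (q x)))) \<partial>M) ^ n
      \<le> (\<integral>\<^sup>+x. ennreal (prod_sample ph n x * min (prod_sample p n x) (prod_sample q n x)) \<partial>PiM {..<n} (\<lambda>_. M))) sequentially"
    proof -
      define r where "r = R a0"
      have r0: "0 \<le> r" by (simp add: r_def R0)
      define Lint where "Lint n = (\<integral>\<^sup>+x. ennreal (Phi n x) \<partial>P n)" for n
      define T where "T n = exp (-t*real n*\<epsilon>) * ((1+c)*r)^n" for n :: nat
      have T0: "0 \<le> T n" for n using r0 c0 by (simp add: T_def)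
      have intW: "(\<integral>\<^sup>+x. ennreal (W n x) \<partial>P n) = ennreal (r ^ n)" for n
        unfolding W_def P_def using prod_int_real[OF sf g_meas[of a0] g_nn[of a0], where n=n]
        by (simp add: I_def[symmetric] IR r_def ennreal_power R0)
      have gshift: "g a y * exp (u * f y) = g (a+u) y" for a u y
        by (simp add: g_def mult_exp_exp algebra_simps)
      have intAp: "(\<integral>\<^sup>+x. ennreal (W n x * Ap n x) \<partial>P n) \<le> ennreal (T n)" for n
      proof (cases "0 < a0")
        case True
        have eq: "W n x * Ap n x = exp (-t*real n*\<epsilon>) * (\<Prod>i<n. g (a0+t) (x i))" for x
        proof -
          have "exp (t*(S n x - real n*\<epsilon>)) = exp (-t*real n*\<epsilon>) * (\<Prod>i<n. exp (t * f (x i)))"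
            by (simp add: S_def exp_sum[symmetric] sum_distrib_left mult_exp_exp algebra_simps)
          moreover have "W n x * (\<Prod>i<n. exp (t * f (x i))) = (\<Prod>i<n. g (a0+t) (x i))"
            by (simp add: W_def prod.distrib[symmetric] gshift)
          ultimately show ?thesis using True by (simp add: Ap_def algebra_simps)
        qed
        have "(\<integral>\<^sup>+x. ennreal (W n x * Ap n x) \<partial>P n) = (\<integral>\<^sup>+x. ennreal (exp (-t*real n*\<epsilon>)) * ennreal (\<Prod>i<n. g (a0+t) (x i)) \<partial>P n)"
          by (intro nn_integral_cong) (simp add: eq ennreal_mult')
        also have "\<dots> = ennreal (exp (-t*real n*\<epsilon>)) * I (a0+t) ^ n"
          unfolding P_def I_def by (subst nn_integral_cmult) (simp_all add: prod_int_real[OF sf g_meas[of "a0+t"] g_nn[of "a0+t"]])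
        also have "\<dots> = ennreal (exp (-t*real n*\<epsilon>) * R (a0+t) ^ n)"
          by (simp add: IR ennreal_power R0 ennreal_mult)
        also have "\<dots> \<le> ennreal (T n)"
          unfolding T_def r_def using Rp[OF True] R0
          by (intro ennreal_leI mult_left_mono power_mono) auto
        finally show ?thesis .
      next
        case False
        hence "(\<integral>\<^sup>+x. ennreal (W n x * Ap n x) \<partial>P n) = 0" by (simp add: Ap_def)
        thus ?thesis by simp
      qed
      have intAm: "(\<integral>\<^sup>+x. ennreal (W n x * Am n x) \<partial>P n) \<le> ennreal (T n)" for n
      proof (cases "a0 < 1")
        case True
        have eq: "W n x * Am n x = exp (-t*real n*\<epsilon>) * (\<Prod>i<n. g (a0+(-t)) (x i))" for x
        proof -
          have "exp (-t*(S n x + real n*\<epsilon>)) = exp (-t*real n*\<epsilon>) * (\<Prod>i<n. exp ((-t) * f (x i)))"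
            by (simp add: S_def exp_sum[symmetric] sum_distrib_left mult_exp_exp algebra_simps)
          moreover have "W n x * (\<Prod>i<n. exp ((-t) * f (x i))) = (\<Prod>i<n. g (a0+(-t)) (x i))"
            by (simp only: W_def prod.distrib[symmetric] gshift)
          ultimately show ?thesis using True by (simp add: Am_def algebra_simps)
        qed
        have "(\<integral>\<^sup>+x. ennreal (W n x * Am n x) \<partial>P n) = (\<integral>\<^sup>+x. ennreal (exp (-t*real n*\<epsilon>)) * ennreal (\<Prod>i<n. g (a0+(-t)) (x i)) \<partial>P n)"
          by (intro nn_integral_cong) (simp add: eq ennreal_mult')
        also have "\<dots> = ennreal (exp (-t*real n*\<epsilon>)) * I (a0+(-t)) ^ n"
          unfolding P_def I_def by (subst nn_integral_cmult) (simp_all add: prod_int_real[OF sf g_meas[of "a0-t"] g_nn[of "a0-t"]])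
        also have "\<dots> = ennreal (exp (-t*real n*\<epsilon>) * R (a0-t) ^ n)"
          by (simp add: IR ennreal_power R0 ennreal_mult)
        also have "\<dots> \<le> ennreal (T n)"
          unfolding T_def r_def using Rm[OF True] R0
          by (intro ennreal_leI mult_left_mono power_mono) auto
        finally show ?thesis .
      next
        case False
        hence "(\<integral>\<^sup>+x. ennreal (W n x * Am n x) \<partial>P n) = 0" by (simp add: Am_def)
        thus ?thesis by simp
      qed
      have main: "ennreal (r ^ n) \<le> ennreal (exp (real n*\<epsilon>)) * Lint n + ennreal (T n) + ennreal (T n)" for n
      proof -
        have "ennreal (r ^ n) = (\<integral>\<^sup>+x. ennreal (W n x) \<partial>P n)" by (simp add: intW)
        also have "\<dots> \<le> (\<integral>\<^sup>+x. ennreal (exp (real n*\<epsilon>)) * ennreal (Phi n x) + ennreal (W n x * Ap n x) + ennreal (W n x * Am n x) \<partial>P n)"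
        proof (intro nn_integral_mono)
          fix x
          have "ennreal (W n x) \<le> ennreal (exp (real n*\<epsilon>) * Phi n x + W n x * Ap n x + W n x * Am n x)"
            using pw[of n x] by (intro ennreal_leI) (simp add: algebra_simps)
          also have "\<dots> = ennreal (exp (real n*\<epsilon>)) * ennreal (Phi n x) + ennreal (W n x * Ap n x) + ennreal (W n x * Am n x)"
            using Phi0[of n x] W0[of n x] Ap0[of n x] Am0[of n x] by (simp add: ennreal_mult)
          finally show "ennreal (W n x) \<le> ennreal (exp (real n*\<epsilon>)) * ennreal (Phi n x) + ennreal (W n x * Ap n x) + ennreal (W n x * Am n x)" .
        qed
        also have "\<dots> = ennreal (exp (real n*\<epsilon>)) * Lint n + (\<integral>\<^sup>+x. ennreal (W n x * Ap n x) \<partial>P n) + (\<integral>\<^sup>+x. ennreal (W n x * Am n x) \<partial>P n)"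
          unfolding Lint_def by (simp add: nn_integral_add nn_integral_cmult)
        also have "\<dots> \<le> ennreal (exp (real n*\<epsilon>)) * Lint n + ennreal (T n) + ennreal (T n)"
          by (intro add_mono intAp intAm order.refl)
        finally show ?thesis .
      qed
      define \<delta> where "\<delta> = t*\<epsilon>/2"
      have d0: "0 < \<delta>" using t0 eps by (simp add: \<delta>_def)
      have Tb: "T n \<le> exp (- \<delta>) ^ n * r ^ n" for n
      proof -
        have "((1+c)*r)^n = (1+c)^n * r^n" by (simp add: power_mult_distrib)
        also have "\<dots> \<le> exp c ^ n * r^n" using c0 r0 c1 by (intro mult_right_mono power_mono) auto
        finally have T1: "T n \<le> (exp (-t*real n*\<epsilon>) * exp c ^ n) * r^n" unfolding T_def mult.assoc by (intro mult_left_mono) auto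
        have "exp (-t*real n*\<epsilon>) * exp c ^ n = exp (real n * (c - t*\<epsilon>))"
          by (simp add: exp_of_nat_mult[symmetric] mult_exp_exp algebra_simps)
        also have "\<dots> \<le> exp (real n * (-\<delta>))" using ct by (intro exp_mono mult_left_mono) (auto simp: \<delta>_def)
        also have "\<dots> = exp (-\<delta>) ^ n" by (metis exp_of_nat_mult)
        finally have "exp (-t*real n*\<epsilon>) * exp c ^ n \<le> exp (-\<delta>) ^ n" .
        thus ?thesis using T1 r0 by (meson order_trans mult_right_mono zero_le_power)
      qed
      have "(\<lambda>n. exp (-\<delta>) ^ n) \<longlonglongrightarrow> 0" using d0 by (intro LIMSEQ_power_zero) simp
      hence ev: "eventually (\<lambda>n. exp (-\<delta>) ^ n < 1/4) sequentially" by (rule order_tendstoD) simp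
      show ?thesis
        using ev
      proof eventually_elim
        case (elim n)
        have Ieq: "(\<integral>\<^sup>+x. ennreal (ph x * q x * exp (a0 * (ln (p x) - ln (q x)))) \<partial>M) = ennreal r"
          using IR[of a0] by (simp add: I_def g_def f_def r_def)
        have Leq: "(\<integral>\<^sup>+x. ennreal (prod_sample ph n x * min (prod_sample p n x) (prod_sample q n x)) \<partial>PiM {..<n} (\<lambda>_. M)) = Lint n"
          by (simp add: Lint_def Phi_def P_def)
        have "exp (-\<delta>) ^ n * r ^ n \<le> (1/4) * r ^ n"
          using elim r0 by (intro mult_right_mono) auto
        hence Tn: "T n \<le> r^n / 4" using Tb[of n] by linarith
        show ?case unfolding Ieq Leq
        proof (cases "Lint n")
          case (real l)
          have l0: "0 \<le> l" using real by simp
          have e1: "ennreal (exp (real n*\<epsilon>) * l + T n + T n) = ennreal (exp (real n*\<epsilon>) * l + T n) + ennreal (T n)"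
            by (rule ennreal_plus) (use l0 T0 in auto)
          have e2: "ennreal (exp (real n*\<epsilon>) * l + T n) = ennreal (exp (real n*\<epsilon>) * l) + ennreal (T n)"
            by (rule ennreal_plus) (use l0 T0 in auto)
          have e3: "ennreal (exp (real n*\<epsilon>) * l) = ennreal (exp (real n*\<epsilon>)) * ennreal l"
            by (rule ennreal_mult') simp
          have "ennreal (r ^ n) \<le> ennreal (exp (real n*\<epsilon>) * l + T n + T n)"
            unfolding e1 e2 e3 using main[of n] real by simp
          hence "r ^ n \<le> exp (real n*\<epsilon>) * l + T n + T n" using l0 T0[of n] by (subst (asm) ennreal_le_iff) auto
          hence "r ^ n / 2 \<le> exp (real n*\<epsilon>) * l" using Tn by linarith
          hence "exp (- real n * \<epsilon>) * (r ^ n / 2) \<le> exp (- real n * \<epsilon>) * (exp (real n*\<epsilon>) * l)"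
            by (intro mult_left_mono) auto
          also have "\<dots> = l" by (simp add: mult.assoc[symmetric] mult_exp_exp)
          finally have "exp (- real n * \<epsilon>) / 2 * r ^ n \<le> l" by simp
          thus "ennreal (exp (- real n * \<epsilon>) / 2) * ennreal r ^ n \<le> Lint n"
            using real r0 by (simp add: ennreal_power ennreal_mult[symmetric])
        next
          case top thus "ennreal (exp (- real n * \<epsilon>) / 2) * ennreal r ^ n \<le> Lint n" by simp
        qed
      qed
    qed
  qed
qed



theorem theorem3p1:
  fixes M :: "'a::polish_space measure" and p q \<phi> :: "'a \<Rightarrow> real"
  assumes sets_M: "sets M = sets borel"
    and sf: "sigma_finite_measure M"
    and p_meas: "p \<in> borel_measurable M" and q_meas: "q \<in> borel_measurable M"
    and p_nn: "\<And>x. 0 \<le> p x" and q_nn: "\<And>x. 0 \<le> q x"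
    and p_dens: "(\<integral>\<^sup>+ x. ennreal (p x) \<partial>M) = 1"
    and q_dens: "(\<integral>\<^sup>+ x. ennreal (q x) \<partial>M) = 1"
    and phi_meas: "\<phi> \<in> borel_measurable M" and phi_nn: "\<And>x. 0 \<le> \<phi> x"
    and p_pos: "AE x in M. 0 < p x" and q_pos: "AE x in M. 0 < q x"
    and rho_pos: "\<And>a. a \<in> {0..1} \<Longrightarrow> 0 < rho_w M \<phi> p q a"
    and rho_fin: "\<And>a. a \<in> {0..1} \<Longrightarrow> rho_w M \<phi> p q a < \<infinity>"
  shows "(\<lambda>n. - ln (enn2real (L_star M \<phi> p q n)) / real n) \<longlonglongrightarrow> chernoff_w M \<phi> p q"
proof -
  note [measurable] = p_meas q_meas phi_meas
  define Lm where "Lm n = (\<integral>\<^sup>+x. ennreal (prod_sample \<phi> n x * min (prod_sample p n x) (prod_sample q n x)) \<partial>PiM {..<n} (\<lambda>_. M))" for n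
  have LL: "L_star M \<phi> p q n = Lm n" for n
    unfolding Lm_def by (rule L_star_eq) (use p_nn q_nn phi_nn in auto)
  define r where "r a = enn2real (rho_w M \<phi> p q a)" for a
  have rho_r: "rho_w M \<phi> p q a = ennreal (r a)" if "a \<in> {0..1}" for a
    using rho_fin[OF that] by (simp add: r_def)
  have r_pos: "0 < r a" if "a \<in> {0..1}" for a
    using rho_pos[OF that] rho_r[OF that] by simp
  have bh: "bhatt_w M \<phi> p q a = - ln (r a)" for a by (simp add: bhatt_w_def r_def)
  have Lup: "Lm n \<le> rho_w M \<phi> p q a ^ n" if a: "a \<in> {0..1}" for a n
  proof -
    define h where "h x = \<phi> x * p x powr a * q x powr (1 - a)" for x
    have hm[measurable]: "h \<in> borel_measurable M" unfolding h_def by measurable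
    have h0: "0 \<le> h x" for x unfolding h_def using phi_nn by simp
    have "Lm n \<le> (\<integral>\<^sup>+x. ennreal (\<Prod>i<n. h (x i)) \<partial>PiM {..<n} (\<lambda>_. M))"
      unfolding Lm_def
    proof (intro nn_integral_mono ennreal_leI)
      fix x
      have "min (prod_sample p n x) (prod_sample q n x) \<le> prod_sample p n x powr a * prod_sample q n x powr (1 - a)"
        using a p_nn q_nn by (intro min_le_powr) (auto simp: prod_sample_def intro: prod_nonneg)
      hence "prod_sample \<phi> n x * min (prod_sample p n x) (prod_sample q n x) \<le> prod_sample \<phi> n x * (prod_sample p n x powr a * prod_sample q n x powr (1 - a))"
        using phi_nn by (intro mult_left_mono) (auto simp: prod_sample_def intro: prod_nonneg)
      also have "\<dots> = (\<Prod>i<n. h (x i))"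
        by (simp add: h_def prod_sample_def prod_powr_distrib prod.distrib)
      finally show "prod_sample \<phi> n x * min (prod_sample p n x) (prod_sample q n x) \<le> (\<Prod>i<n. h (x i))" .
    qed
    also have "\<dots> = rho_w M \<phi> p q a ^ n"
      using prod_int_real[OF sf hm h0, of n] by (simp add: rho_w_def h_def)
    finally show ?thesis .
  qed
  have Lfin: "Lm n < \<infinity>" for n
  proof -
    have "rho_w M \<phi> p q 0 ^ n = ennreal (r 0 ^ n)" using rho_r[of 0] r_pos[of 0] by (simp add: ennreal_power)
    hence "rho_w M \<phi> p q 0 ^ n < \<infinity>" by simp
    thus ?thesis using Lup[of 0 n] by (meson atLeastAtMost_iff order.strict_trans1 zero_le_one order.refl)
  qed
  define c0 where "c0 = (\<integral>\<^sup>+x. ennreal (\<phi> x * min (p x) (q x)) \<partial>M)"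
  have c0_le: "c0 \<le> rho_w M \<phi> p q a" if a: "a \<in> {0..1}" for a
    unfolding c0_def rho_w_def
  proof (intro nn_integral_mono ennreal_leI)
    fix x
    have "\<phi> x * min (p x) (q x) \<le> \<phi> x * (p x powr a * q x powr (1 - a))"
      using a p_nn q_nn phi_nn by (intro mult_left_mono min_le_powr) auto
    thus "\<phi> x * min (p x) (q x) \<le> \<phi> x * p x powr a * q x powr (1 - a)" by (simp add: mult.assoc)
  qed
  have c0_pos: "0 < c0"
  proof (rule ccontr)
    assume "\<not> 0 < c0" hence "c0 = 0" by simp
    hence "AE x in M. ennreal (\<phi> x * min (p x) (q x)) = 0" unfolding c0_def
      by (subst (asm) nn_integral_0_iff_AE) auto
    hence "AE x in M. \<phi> x = 0" using p_pos q_pos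
    proof eventually_elim
      fix x assume h: "ennreal (\<phi> x * min (p x) (q x)) = 0" "0 < p x" "0 < q x"
      hence "\<phi> x * min (p x) (q x) \<le> 0" by (simp add: ennreal_eq_0_iff)
      moreover have "0 < min (p x) (q x)" using h by simp
      ultimately have "\<phi> x \<le> 0" by (simp add: mult_le_0_iff)
      thus "\<phi> x = 0" using phi_nn[of x] by simp
    qed
    hence "rho_w M \<phi> p q 1 = (\<integral>\<^sup>+x. 0 \<partial>M)" unfolding rho_w_def
      by (intro nn_integral_cong_AE) auto
    thus False using rho_pos[of 1] by simp
  qed
  define c0r where "c0r = enn2real c0"
  have c0_fin: "c0 < \<infinity>" using c0_le[of 0] rho_fin[of 0] by (meson atLeastAtMost_iff order.strict_trans1 zero_le_one order.refl)
  have c0r: "c0 = ennreal c0r" "0 < c0r" using c0_fin c0_pos by (auto simp: c0r_def enn2real_positive_iff)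
  have r_ge: "c0r \<le> r a" if a: "a \<in> {0..1}" for a
    using c0_le[OF a] c0r rho_r[OF a] r_pos[OF a] by simp
  have bdd: "bdd_above ((\<lambda>a. bhatt_w M \<phi> p q a) ` {0..1})"
  proof (rule bdd_aboveI2)
    fix a :: real assume a: "a \<in> {0..1}"
    have "ln c0r \<le> ln (r a)" using r_ge[OF a] c0r(2) by simp
    thus "bhatt_w M \<phi> p q a \<le> - ln c0r" by (simp add: bh)
  qed
  define D where "D = chernoff_w M \<phi> p q"
  have bhD: "bhatt_w M \<phi> p q a \<le> D" if "a \<in> {0..1}" for a
    unfolding D_def chernoff_w_def by (rule cSUP_upper[OF that bdd])
  have rD: "exp (-D) \<le> r a" if a: "a \<in> {0..1}" for a
  proof -
    have "- D \<le> ln (r a)" using bhD[OF a] by (simp add: bh)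
    hence "exp (-D) \<le> exp (ln (r a))" by simp
    thus ?thesis using r_pos[OF a] by simp
  qed
  define B where "B k x \<longleftrightarrow> 0 < p x \<and> 0 < q x \<and> \<bar>ln (p x) - ln (q x)\<bar> \<le> real k + 1" for k :: nat and x
  define ph where "ph k x = (if B k x then \<phi> x else 0)" for k x
  define tl where "tl k x = (if B k x then 0 else \<phi> x * (p x + q x))" for k x
  have [measurable]: "Measurable.pred M (B k)" for k unfolding B_def by measurable
  have ph_meas[measurable]: "ph k \<in> borel_measurable M" for k unfolding ph_def by measurable
  have tl_meas[measurable]: "tl k \<in> borel_measurable M" for k unfolding tl_def by measurable
  have ph_nn: "0 \<le> ph k x" for k x using phi_nn by (simp add: ph_def)
  have tl_nn: "0 \<le> tl k x" for k x using phi_nn p_nn q_nn by (simp add: tl_def)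
  have phq: "(\<integral>\<^sup>+x. ennreal (\<phi> x * q x) \<partial>M) = rho_w M \<phi> p q 0"
    unfolding rho_w_def using p_pos by (intro nn_integral_cong_AE) (auto simp: q_nn)
  have php: "(\<integral>\<^sup>+x. ennreal (\<phi> x * p x) \<partial>M) = rho_w M \<phi> p q 1"
    unfolding rho_w_def using q_pos by (intro nn_integral_cong_AE) (auto simp: p_nn)
  define Ik where "Ik k a = (\<integral>\<^sup>+x. ennreal (ph k x * q x * exp (a * (ln (p x) - ln (q x)))) \<partial>M)" for k a
  have split: "rho_w M \<phi> p q a \<le> Ik k a + (\<integral>\<^sup>+x. ennreal (tl k x) \<partial>M)" if a: "a \<in> {0..1}" for k a
  proof -
    have "rho_w M \<phi> p q a \<le> (\<integral>\<^sup>+x. ennreal (ph k x * q x * exp (a * (ln (p x) - ln (q x)))) + ennreal (tl k x) \<partial>M)"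
      unfolding rho_w_def
    proof (intro nn_integral_mono)
      fix x
      have "\<phi> x * p x powr a * q x powr (1 - a) \<le> ph k x * q x * exp (a * (ln (p x) - ln (q x))) + tl k x"
      proof (cases "B k x")
        case True
        hence pq: "0 < p x" "0 < q x" by (auto simp: B_def)
        have e: "exp (a * ln (p x)) * exp ((1-a) * ln (q x)) = exp (ln (q x)) * exp (a * (ln (p x) - ln (q x)))"
          by (simp add: mult_exp_exp algebra_simps)
        have "p x powr a * q x powr (1 - a) = q x * exp (a * (ln (p x) - ln (q x)))"
          using pq e by (simp add: powr_def mult.commute)
        thus ?thesis using True by (simp add: ph_def tl_def mult.assoc)
      next
        case False
        have "\<phi> x * (p x powr a * q x powr (1 - a)) \<le> \<phi> x * (p x + q x)"
          using a p_nn q_nn phi_nn by (intro mult_left_mono powr_le_sum) auto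
        thus ?thesis using False by (simp add: ph_def tl_def mult.assoc)
      qed
      thus "ennreal (\<phi> x * p x powr a * q x powr (1 - a)) \<le> ennreal (ph k x * q x * exp (a * (ln (p x) - ln (q x)))) + ennreal (tl k x)"
        using ph_nn[of k x] q_nn[of x] tl_nn[of k x] by (simp add: ennreal_plus[symmetric] del: ennreal_plus)
    qed
    also have "\<dots> = Ik k a + (\<integral>\<^sup>+x. ennreal (tl k x) \<partial>M)"
      unfolding Ik_def by (rule nn_integral_add) auto
    finally show ?thesis .
  qed
  have tl_small: "\<exists>k. (\<integral>\<^sup>+x. ennreal (tl k x) \<partial>M) < ennreal \<delta>" if d: "0 < \<delta>" for \<delta>
  proof -
    have dec: "decseq (\<lambda>k x. ennreal (tl k x))"
    proof (rule decseq_SucI, rule le_funI)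
      fix k x
      have "B k x \<Longrightarrow> B (Suc k) x" by (auto simp: B_def)
      thus "ennreal (tl (Suc k) x) \<le> ennreal (tl k x)" using tl_nn[of "Suc k" x] by (auto simp: tl_def)
    qed
    have pq_fin: "(\<integral>\<^sup>+x. ennreal (\<phi> x * (p x + q x)) \<partial>M) < \<infinity>"
    proof -
      have "(\<integral>\<^sup>+x. ennreal (\<phi> x * (p x + q x)) \<partial>M) = (\<integral>\<^sup>+x. ennreal (\<phi> x * p x) + ennreal (\<phi> x * q x) \<partial>M)"
        using phi_nn p_nn q_nn by (intro nn_integral_cong) (simp add: distrib_left)
      also have "\<dots> = rho_w M \<phi> p q 1 + rho_w M \<phi> p q 0"
        by (subst nn_integral_add) (auto simp: php phq)
      also have "\<dots> < \<infinity>" using rho_fin[of 0] rho_fin[of 1] by simp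
      finally show ?thesis .
    qed
    have fin0: "(\<integral>\<^sup>+x. ennreal (tl 0 x) \<partial>M) < \<infinity>"
    proof -
      have "(\<integral>\<^sup>+x. ennreal (tl 0 x) \<partial>M) \<le> (\<integral>\<^sup>+x. ennreal (\<phi> x * (p x + q x)) \<partial>M)"
        using phi_nn p_nn q_nn by (intro nn_integral_mono ennreal_leI) (auto simp: tl_def)
      thus ?thesis using pq_fin by (meson order.strict_trans1)
    qed
    have "(\<integral>\<^sup>+x. (INF k. ennreal (tl k x)) \<partial>M) = (INF k. \<integral>\<^sup>+x. ennreal (tl k x) \<partial>M)"
      by (rule nn_integral_monotone_convergence_INF_decseq[OF dec]) (use fin0 in auto)
    moreover have "(\<integral>\<^sup>+x. (INF k. ennreal (tl k x)) \<partial>M) = (\<integral>\<^sup>+x. 0 \<partial>M)"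
    proof (intro nn_integral_cong_AE)
      show "AE x in M. (INF k. ennreal (tl k x)) = 0" using p_pos q_pos
      proof eventually_elim
        fix x assume pq: "0 < p x" "0 < q x"
        obtain k :: nat where "\<bar>ln (p x) - ln (q x)\<bar> \<le> real k" using real_arch_simple by blast
        hence "B k x" using pq by (auto simp: B_def)
        hence "tl k x = 0" by (simp add: tl_def)
        hence "(INF k. ennreal (tl k x)) \<le> 0" by (metis INF_lower2 UNIV_I ennreal_0 order.refl)
        thus "(INF k. ennreal (tl k x)) = 0" by simp
      qed
    qed
    ultimately have "(INF k. \<integral>\<^sup>+x. ennreal (tl k x) \<partial>M) = 0" by simp
    hence "(INF k. \<integral>\<^sup>+x. ennreal (tl k x) \<partial>M) < ennreal \<delta>" using d by simp
    thus ?thesis by (simp add: INF_less_iff)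
  qed
  have main_lb: "eventually (\<lambda>n. exp (- real n * \<epsilon>) / 2 * exp (-(D+\<epsilon>)) ^ n \<le> enn2real (Lm n)) sequentially"
    if eps: "0 < \<epsilon>" for \<epsilon>
  proof -
    define \<delta> where "\<delta> = exp (-D) * (1 - exp (-\<epsilon>))"
    have d0: "0 < \<delta>" using eps by (simp add: \<delta>_def)
    obtain k where k: "(\<integral>\<^sup>+x. ennreal (tl k x) \<partial>M) < ennreal \<delta>" using tl_small[OF d0] by blast
    have hB: "0 < p x \<and> 0 < q x \<and> \<bar>ln (p x) - ln (q x)\<bar> \<le> real k + 1" if "ph k x \<noteq> 0" for x
      using that by (auto simp: ph_def B_def split: if_splits)
    have finq: "(\<integral>\<^sup>+x. ennreal (ph k x * q x) \<partial>M) < \<infinity>"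
    proof -
      have "(\<integral>\<^sup>+x. ennreal (ph k x * q x) \<partial>M) \<le> (\<integral>\<^sup>+x. ennreal (\<phi> x * q x) \<partial>M)"
        using q_nn phi_nn by (intro nn_integral_mono ennreal_leI) (auto simp: ph_def)
      also have "\<dots> < \<infinity>" using phq rho_fin[of 0] by simp
      finally show ?thesis .
    qed
    have K0: "0 < real k + 1" by simp
    obtain a0 where a0: "a0 \<in> {0..1}" and ev: "\<forall>\<epsilon>>0. eventually (\<lambda>n. ennreal (exp (- real n * \<epsilon>) / 2) * Ik k a0 ^ n
      \<le> (\<integral>\<^sup>+x. ennreal (prod_sample (ph k) n x * min (prod_sample p n x) (prod_sample q n x)) \<partial>PiM {..<n} (\<lambda>_. M))) sequentially"
      using core[OF sf ph_meas p_meas q_meas ph_nn p_nn q_nn hB K0 finq] unfolding Ik_def by blast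
    have Ige: "ennreal (exp (-(D+\<epsilon>))) \<le> Ik k a0"
    proof (rule ccontr)
      assume "\<not> ennreal (exp (-(D+\<epsilon>))) \<le> Ik k a0"
      hence Ilt: "Ik k a0 < ennreal (exp (-(D+\<epsilon>)))" by simp
      then obtain i where i: "Ik k a0 = ennreal i" "0 \<le> i" "i < exp (-(D+\<epsilon>))"
        by (cases "Ik k a0" rule: ennreal_cases) (auto simp: ennreal_less_iff)
      from k obtain \<tau> where tau: "(\<integral>\<^sup>+x. ennreal (tl k x) \<partial>M) = ennreal \<tau>" "0 \<le> \<tau>" "\<tau> < \<delta>"
        by (cases "(\<integral>\<^sup>+x. ennreal (tl k x) \<partial>M)" rule: ennreal_cases) (auto simp: ennreal_less_iff)
      have "ennreal (r a0) \<le> ennreal (i + \<tau>)"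
        using split[OF a0, of k] rho_r[OF a0] i tau by simp
      hence "r a0 \<le> i + \<tau>" by (subst (asm) ennreal_le_iff) (use i tau in auto)
      moreover have "exp (-(D+\<epsilon>)) + \<delta> = exp (-D)"
        by (simp add: \<delta>_def algebra_simps exp_diff exp_minus field_simps)
      ultimately show False using rD[OF a0] i tau by linarith
    qed
    have Lk: "(\<integral>\<^sup>+x. ennreal (prod_sample (ph k) n x * min (prod_sample p n x) (prod_sample q n x)) \<partial>PiM {..<n} (\<lambda>_. M)) \<le> Lm n" for n
      unfolding Lm_def
    proof (intro nn_integral_mono ennreal_leI mult_right_mono)
      fix x
      show "prod_sample (ph k) n x \<le> prod_sample \<phi> n x"
        unfolding prod_sample_def using ph_nn phi_nn by (intro prod_mono) (auto simp: ph_def)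
      show "0 \<le> min (prod_sample p n x) (prod_sample q n x)"
        unfolding prod_sample_def using p_nn q_nn by (auto intro: prod_nonneg)
    qed
    show ?thesis using ev[rule_format, OF eps]
    proof eventually_elim
      case (elim n)
      have "ennreal (exp (- real n * \<epsilon>) / 2 * exp (-(D+\<epsilon>)) ^ n) = ennreal (exp (- real n * \<epsilon>) / 2) * ennreal (exp (-(D+\<epsilon>))) ^ n"
      proof -
        have "ennreal (exp (- real n * \<epsilon>) / 2 * exp (-(D+\<epsilon>)) ^ n) = ennreal (exp (- real n * \<epsilon>) / 2) * ennreal (exp (-(D+\<epsilon>)) ^ n)"
          by (rule ennreal_mult') simp
        also have "ennreal (exp (-(D+\<epsilon>)) ^ n) = ennreal (exp (-(D+\<epsilon>))) ^ n"
          by (rule ennreal_power[symmetric]) simp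
        finally show ?thesis .
      qed
      also have "\<dots> \<le> ennreal (exp (- real n * \<epsilon>) / 2) * Ik k a0 ^ n"
        using Ige by (intro mult_left_mono power_mono) auto
      also have "\<dots> \<le> Lm n" using elim Lk[of n] by (meson order_trans)
      also have "\<dots> = ennreal (enn2real (Lm n))" using Lfin[of n] by simp
      finally show ?case by (subst (asm) ennreal_le_iff) auto
    qed
  qed
  have Lpos: "eventually (\<lambda>n. 0 < enn2real (Lm n)) sequentially"
    using main_lb[OF zero_less_one]
  proof eventually_elim
    case (elim n)
    have "0 < exp (- real n * 1) / 2 * exp (-(D+1)) ^ n" by simp
    thus ?case using elim by linarith
  qed
  show ?thesis
    unfolding LL D_def[symmetric]
  proof (rule order_tendstoI)
    fix y assume y: "y < D"
    obtain a where a: "a \<in> {0..1}" "y < bhatt_w M \<phi> p q a"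
      using y less_cSUP_iff[OF _ bdd, of y] unfolding D_def chernoff_w_def by auto
    show "eventually (\<lambda>n. y < - ln (enn2real (Lm n)) / real n) sequentially"
      using Lpos eventually_gt_at_top[of 0]
    proof eventually_elim
      case (elim n)
      define l where "l = enn2real (Lm n)"
      have l0: "0 < l" using elim by (simp add: l_def)
      have "Lm n \<le> ennreal (r a ^ n)" using Lup[OF a(1), of n] rho_r[OF a(1)] r_pos[OF a(1)] by (simp add: ennreal_power)
      hence "l \<le> r a ^ n" unfolding l_def using r_pos[OF a(1)] by (simp add: enn2real_leI)
      hence "ln l \<le> ln (r a ^ n)" using l0 by simp
      also have "\<dots> = real n * ln (r a)" using r_pos[OF a(1)] by (simp add: ln_realpow)
      finally have h: "ln l \<le> real n * ln (r a)" .
      have "ln l / real n \<le> ln (r a)" using h elim by (simp add: divide_le_eq mult.commute)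
      hence "- ln (r a) \<le> - ln l / real n" by simp
      thus ?case using a(2) by (simp add: bh l_def)
    qed
  next
    fix y assume y: "D < y"
    define \<epsilon> where "\<epsilon> = (y - D) / 3"
    have eps: "0 < \<epsilon>" using y by (simp add: \<epsilon>_def)
    obtain N :: nat where N: "ln 2 / \<epsilon> < real N" using reals_Archimedean2 by blast
    show "eventually (\<lambda>n. - ln (enn2real (Lm n)) / real n < y) sequentially"
      using main_lb[OF eps] Lpos eventually_gt_at_top[of N]
    proof eventually_elim
      case (elim n)
      define l where "l = enn2real (Lm n)"
      have l0: "0 < l" using elim by (simp add: l_def)
      have n0: "0 < real n" using elim by simp
      have "exp (- real n * \<epsilon>) / 2 * exp (-(D+\<epsilon>)) ^ n = exp (- real n * \<epsilon> - ln 2 + real n * (-(D+\<epsilon>)))"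
        by (simp add: exp_add exp_diff exp_of_nat_mult)
      hence "exp (- real n * \<epsilon> - ln 2 + real n * (-(D+\<epsilon>))) \<le> l" using elim by (simp add: l_def)
      hence "- real n * \<epsilon> - ln 2 + real n * (-(D+\<epsilon>)) \<le> ln l" using l0 by (simp add: ln_ge_iff)
      hence "- ln l \<le> real n * (D + 2*\<epsilon>) + ln 2" by (simp add: algebra_simps)
      moreover have "ln 2 < real n * \<epsilon>"
      proof -
        have "ln 2 / \<epsilon> < real n" using N elim by linarith
        thus ?thesis using eps by (simp add: divide_less_eq mult.commute)
      qed
      ultimately have "- ln l < real n * (D + 3*\<epsilon>)" by (simp add: algebra_simps)
      also have "D + 3*\<epsilon> = y" by (simp add: \<epsilon>_def field_simps)
      finally have "- ln l < real n * y" .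
      hence "(- ln l) / real n < (real n * y) / real n" using n0 by (intro divide_strict_right_mono) auto
      hence "- ln l / real n < y" using n0 by simp
      thus ?case by (simp add: l_def)
    qed
  qed
qed

end
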